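(* Let $A,B$ be wqos such that $A$ is self-residual, and let $k\in\mathbb{N}$. Then $\mathbf{w}(A\times (B\cdot k))\ge \mathbf{w}(A\times B)\cdot k$.
   Context: A wqo is a quasi-order with no infinite bad sequence. The width $\mathbf{w}(A)$ is the rank of the forest of nonempty finite sequences of pairwise incomparable elements of $A$ ordered by initial segment ($\mathbf{w}(A)=\sup_s(r(s)+1)$, $r(s)=\sup\{r(t)+1: t$ child of $s\}$). For $x\in A$, $A_{\not\le x}=\{y\in A: y\not\le x\}$ with the induced order. $A$ is self-residual if for every $x\in A$, $A_{\not\le x}$ contains a substructure (subset with induced order) isomorphic to $A$. $B\cdot k$ denotes the lexicographic sum of $k$ disjoint copies $B^{(0)},\dots,B^{(k-1)}$ of $B$: within a copy the order is that of $B$, and every element of $B^{(j)}$ is strictly below every element of $B^{(j')}$ whenever $j<j'$. $A\times C$ has the componentwise order; $\cdot$ on ordinals is ordinary multiplication. *)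

theory Defs
  imports Main
begin

definition qo_on :: "'a set \<Rightarrow> ('a \<Rightarrow> 'a \<Rightarrow> bool) \<Rightarrow> bool" where
  "qo_on A le \<longleftrightarrow> (\<forall>x\<in>A. le x x) \<and> (\<forall>x\<in>A. \<forall>y\<in>A. \<forall>z\<in>A. le x y \<longrightarrow> le y z \<longrightarrow> le x z)"

definition wqo_on :: "'a set \<Rightarrow> ('a \<Rightarrow> 'a \<Rightarrow> bool) \<Rightarrow> bool" where
  "wqo_on A le \<longleftrightarrow> qo_on A le \<and>
     (\<forall>f :: nat \<Rightarrow> 'a. (\<forall>n. f n \<in> A) \<longrightarrow> (\<exists>i j. i < j \<and> le (f i) (f j)))"

definition self_residual :: "'a set \<Rightarrow> ('a \<Rightarrow> 'a \<Rightarrow> bool) \<Rightarrow> bool" where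
  "self_residual A le \<longleftrightarrow> (\<forall>x\<in>A. \<exists>f. inj_on f A \<and> f ` A \<subseteq> {y\<in>A. \<not> le y x} \<and>
       (\<forall>a\<in>A. \<forall>b\<in>A. le a b \<longleftrightarrow> le (f a) (f b)))"

text \<open>Lexicographic sum B . k of k copies of B: carrier and order.\<close>
definition lexsum_carrier :: "'b set \<Rightarrow> nat \<Rightarrow> (nat \<times> 'b) set" where
  "lexsum_carrier B k = {(j, b). j < k \<and> b \<in> B}"

definition lexsum_le :: "('b \<Rightarrow> 'b \<Rightarrow> bool) \<Rightarrow> (nat \<times> 'b) \<Rightarrow> (nat \<times> 'b) \<Rightarrow> bool" where
  "lexsum_le le p q \<longleftrightarrow> fst p < fst q \<or> (fst p = fst q \<and> le (snd p) (snd q))"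

definition prod_le :: "('a \<Rightarrow> 'a \<Rightarrow> bool) \<Rightarrow> ('b \<Rightarrow> 'b \<Rightarrow> bool) \<Rightarrow> ('a \<times> 'b) \<Rightarrow> ('a \<times> 'b) \<Rightarrow> bool" where
  "prod_le leA leB p q \<longleftrightarrow> leA (fst p) (fst q) \<and> leB (snd p) (snd q)"

text \<open>Nodes of the forest: nonempty finite sequences of pairwise incomparable elements.
  The children of a node s are the one-element extensions s @ [x].\<close>
definition antichain_seq :: "'a set \<Rightarrow> ('a \<Rightarrow> 'a \<Rightarrow> bool) \<Rightarrow> 'a list \<Rightarrow> bool" where
  "antichain_seq A le s \<longleftrightarrow> s \<noteq> [] \<and> set s \<subseteq> A \<and>
     (\<forall>i<length s. \<forall>j<length s. i \<noteq> j \<longrightarrow> \<not> le (s ! i) (s ! j))"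

text \<open>Ordinals are represented by well-order relations (as in Main's BNF library, compared
  with ordLeq).  rank_ge A le W s d means: r(s) >= order type of the strict initial segment
  of W below d.\<close>
inductive rank_ge :: "'a set \<Rightarrow> ('a \<Rightarrow> 'a \<Rightarrow> bool) \<Rightarrow> 'c rel \<Rightarrow> 'a list \<Rightarrow> 'c \<Rightarrow> bool"
  for A le W where
  "(\<And>d'. (d', d) \<in> W \<Longrightarrow> d' \<noteq> d \<Longrightarrow>
      \<exists>x. antichain_seq A le (s @ [x]) \<and> rank_ge A le W (s @ [x]) d')
   \<Longrightarrow> rank_ge A le W s d"

text \<open>width_ge A le W means: w(A) >= order type of W, where w(A) = sup_s (r(s)+1).
  (w(A) > beta iff some node s has r(s) >= beta.)\<close>
definition width_ge :: "'a set \<Rightarrow> ('a \<Rightarrow> 'a \<Rightarrow> bool) \<Rightarrow> 'c rel \<Rightarrow> bool" where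
  "width_ge A le W \<longleftrightarrow> (\<forall>d\<in>Field W. \<exists>s. antichain_seq A le s \<and> rank_ge A le W s d)"

text \<open>Ordinal multiplication by a natural number: the order type of W times k is the
  lexicographic product of {0..<k} (most significant) with W.\<close>
definition ord_mult_nat :: "'c rel \<Rightarrow> nat \<Rightarrow> (nat \<times> 'c) rel" where
  "ord_mult_nat W k = {((i, a), (j, b)). i < k \<and> j < k \<and> a \<in> Field W \<and> b \<in> Field W \<and>
       (i < j \<or> (i = j \<and> (a, b) \<in> W))}"

end

theory Submission
  imports Defs
begin


definition emb :: "'a set \<Rightarrow> ('a \<Rightarrow> 'a \<Rightarrow> bool) \<Rightarrow> ('a \<Rightarrow> 'a) \<Rightarrow> bool" where
  "emb A le f \<longleftrightarrow> (\<forall>x\<in>A. f x \<in> A) \<and> (\<forall>x\<in>A. \<forall>y\<in>A. le (f x) (f y) = le x y)"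

lemma emb_funpow: "emb A le f \<Longrightarrow> emb A le (f ^^ n)"
  by (induction n) (auto simp: emb_def)

lemma emb_comp: "emb A le f \<Longrightarrow> emb A le g \<Longrightarrow> emb A le (f \<circ> g)"
  by (auto simp: emb_def)

lemma funpow_in: "emb A le f \<Longrightarrow> x \<in> A \<Longrightarrow> (f ^^ n) x \<in> A"
  using emb_funpow[of A le f n] by (auto simp: emb_def)

lemma exists_pow_above:
  assumes "wqo_on A le" "emb A le f" "b \<in> A"
  shows "\<exists>n. n \<ge> 1 \<and> le b ((f ^^ n) b)"
proof -
  have W: "\<forall>g::nat \<Rightarrow> 'a. (\<forall>n. g n \<in> A) \<longrightarrow> (\<exists>i j. i < j \<and> le (g i) (g j))"
    using assms(1) unfolding wqo_on_def by (rule conjunct2)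
  have "\<exists>i j. i < j \<and> le ((f ^^ i) b) ((f ^^ j) b)"
    using W[rule_format, of "\<lambda>j. (f ^^ j) b"] funpow_in[OF assms(2,3)] by auto
  then obtain i j where ij: "i < j" "le ((f ^^ i) b) ((f ^^ j) b)" by blast
  have "(f ^^ j) b = (f ^^ i) ((f ^^ (j - i)) b)"
    using ij(1) by (metis funpow_add le_add_diff_inverse less_imp_le o_apply)
  then have "le ((f ^^ i) b) ((f ^^ i) ((f ^^ (j - i)) b))" using ij by simp
  then have "le b ((f ^^ (j - i)) b)"
    using emb_funpow[OF assms(2), of i] funpow_in[OF assms(2)] assms(3) unfolding emb_def by blast
  then show ?thesis using ij(1) by (intro exI[of _ "j - i"]) auto
qed

lemma avoid_list:
  assumes "wqo_on A le" "self_residual A le"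
  shows "set L \<subseteq> A \<Longrightarrow> \<exists>f. emb A le f \<and> (\<forall>x\<in>A. \<forall>a\<in>set L. \<not> le (f x) a)"
proof (induction L)
  case Nil
  show ?case by (intro exI[of _ id]) (auto simp: emb_def)
next
  case (Cons b L)
  then obtain \<phi> where phi: "emb A le \<phi>" "\<forall>x\<in>A. \<forall>a\<in>set L. \<not> le (\<phi> x) a" by auto
  from Cons.prems have bA: "b \<in> A" by auto
  from assms(2) bA obtain \<psi> where psi: "\<psi> ` A \<subseteq> {y\<in>A. \<not> le y b}" "\<forall>x\<in>A. \<forall>y\<in>A. le x y \<longleftrightarrow> le (\<psi> x) (\<psi> y)"
    unfolding self_residual_def by blast
  have psi_emb: "emb A le \<psi>" using psi unfolding emb_def by auto
  obtain n where n: "n \<ge> 1" "le b ((\<phi> ^^ n) b)" using exists_pow_above[OF assms(1) phi(1) bA] by auto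
  define g where "g = (\<phi> ^^ n) \<circ> \<psi>"
  have gemb: "emb A le g" unfolding g_def by (intro emb_comp emb_funpow phi psi_emb)
  have "\<forall>x\<in>A. \<forall>a\<in>set (b # L). \<not> le (g x) a"
  proof (intro ballI)
    fix x a assume x: "x \<in> A" and a: "a \<in> set (b # L)"
    have px: "\<psi> x \<in> A" "\<not> le (\<psi> x) b" using psi(1) x by auto
    obtain m where m: "n = Suc m" using n(1) by (cases n) auto
    have gx: "g x = \<phi> ((\<phi> ^^ m) (\<psi> x))" unfolding g_def m by simp
    have inA: "(\<phi> ^^ m) (\<psi> x) \<in> A" using funpow_in[OF phi(1) px(1)] .
    show "\<not> le (g x) a"
    proof
      assume le: "le (g x) a"
      show False
      proof (cases "a = b")
        case True
        have q: "qo_on A le" using assms(1) unfolding wqo_on_def by auto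
        have "g x \<in> A" using gemb x unfolding emb_def by auto
        moreover have "(\<phi> ^^ n) b \<in> A" using funpow_in[OF phi(1) bA] .
        ultimately have "le (g x) ((\<phi> ^^ n) b)" using q le n(2) True bA unfolding qo_on_def by blast
        then have "le (\<psi> x) b" using emb_funpow[OF phi(1), of n] px(1) bA unfolding g_def emb_def by auto
        then show False using px by simp
      next
        case False
        then have "a \<in> set L" using a by auto
        then show False using phi(2) inA le gx by auto
      qed
    qed
  qed
  then show ?case using gemb by blast
qed




definition inc :: "('a \<Rightarrow> 'a \<Rightarrow> bool) \<Rightarrow> 'a list \<Rightarrow> bool" where
  "inc le s \<longleftrightarrow> (\<forall>i<length s. \<forall>j<length s. i \<noteq> j \<longrightarrow> \<not> le (s!i) (s!j))"

lemma antichain_iff: "antichain_seq X le s \<longleftrightarrow> s \<noteq> [] \<and> set s \<subseteq> X \<and> inc le s"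
  unfolding antichain_seq_def inc_def by auto

lemma inc_Nil: "inc le []" by (simp add: inc_def)

lemma inc_append:
  "inc le (p @ q) \<longleftrightarrow> inc le p \<and> inc le q \<and> (\<forall>x\<in>set p. \<forall>y\<in>set q. \<not> le x y \<and> \<not> le y x)"
proof
  assume H: "inc le (p @ q)"
  have 1: "inc le p"
    unfolding inc_def proof (intro allI impI)
    fix i j assume "i < length p" "j < length p" "i \<noteq> j"
    then show "\<not> le (p!i) (p!j)" using H[unfolded inc_def, rule_format, of i j] by (simp add: nth_append)
  qed
  have 2: "inc le q"
    unfolding inc_def proof (intro allI impI)
    fix i j assume "i < length q" "j < length q" "i \<noteq> j"
    then show "\<not> le (q!i) (q!j)"
      using H[unfolded inc_def, rule_format, of "length p + i" "length p + j"] by (simp add: nth_append)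
  qed
  have 3: "\<forall>x\<in>set p. \<forall>y\<in>set q. \<not> le x y \<and> \<not> le y x"
  proof (intro ballI)
    fix x y assume "x \<in> set p" "y \<in> set q"
    then obtain i j where ij: "i < length p" "p!i = x" "j < length q" "q!j = y" by (auto simp: in_set_conv_nth)
    have "\<not> le ((p@q)!i) ((p@q)!(length p + j))"
      using H[unfolded inc_def, rule_format, of i "length p + j"] ij by simp
    moreover have "\<not> le ((p@q)!(length p + j)) ((p@q)!i)"
      using H[unfolded inc_def, rule_format, of "length p + j" i] ij by simp
    ultimately show "\<not> le x y \<and> \<not> le y x" using ij by (simp add: nth_append)
  qed
  show "inc le p \<and> inc le q \<and> (\<forall>x\<in>set p. \<forall>y\<in>set q. \<not> le x y \<and> \<not> le y x)" using 1 2 3 by blast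
next
  assume H: "inc le p \<and> inc le q \<and> (\<forall>x\<in>set p. \<forall>y\<in>set q. \<not> le x y \<and> \<not> le y x)"
  show "inc le (p @ q)" unfolding inc_def
  proof (intro allI impI)
    fix i j assume ij: "i < length (p@q)" "j < length (p@q)" "i \<noteq> j"
    show "\<not> le ((p@q)!i) ((p@q)!j)"
    proof (cases "i < length p")
      case True
      note i = True
      show ?thesis
      proof (cases "j < length p")
        case True
        then show ?thesis using i ij H unfolding inc_def by (simp add: nth_append)
      next
        case False
        then have "(p@q)!j \<in> set q" using ij by (simp add: nth_append)
        moreover have "(p@q)!i \<in> set p" using i by (simp add: nth_append)
        ultimately show ?thesis using H by blast
      qed
    next
      case False
      note i = False
      show ?thesis
      proof (cases "j < length p")
        case True
        then have "(p@q)!j \<in> set p" using ij by (simp add: nth_append)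
        moreover have "(p@q)!i \<in> set q" using i ij by (simp add: nth_append)
        ultimately show ?thesis using H by blast
      next
        case False
        have "i - length p < length q" "j - length p < length q" "i - length p \<noteq> j - length p"
          using i False ij by auto
        then have "\<not> le (q!(i - length p)) (q!(j - length p))" using H unfolding inc_def by blast
        then show ?thesis using i False by (simp add: nth_append)
      qed
    qed
  qed
qed

lemma inc_map:
  assumes "inc le' t" "\<forall>x\<in>set t. \<forall>y\<in>set t. le (g x) (g y) \<longrightarrow> le' x y"
  shows "inc le (map g t)"
  unfolding inc_def
proof (intro allI impI)
  fix i j assume ij: "i < length (map g t)" "j < length (map g t)" "i \<noteq> j"
  then have "\<not> le' (t!i) (t!j)" using assms(1) unfolding inc_def by simp
  moreover have "t!i \<in> set t" "t!j \<in> set t" using ij by auto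
  ultimately show "\<not> le (map g t ! i) (map g t ! j)" using assms(2) ij by auto
qed

lemma rank_geD:
  assumes "rank_ge X le R s d" "(d', d) \<in> R" "d' \<noteq> d"
  shows "\<exists>x. antichain_seq X le (s @ [x]) \<and> rank_ge X le R (s @ [x]) d'"
  using assms(1)
proof (rule rank_ge.cases)
  fix d0 s0 assume e: "s = s0" "d = d0" and H: "\<And>d'. (d', d0) \<in> R \<Longrightarrow> d' \<noteq> d0 \<Longrightarrow>
      \<exists>x. antichain_seq X le (s0 @ [x]) \<and> rank_ge X le R (s0 @ [x]) d'"
  have "(d', d0) \<in> R" "d' \<noteq> d0" using assms(2,3) e by simp_all
  from H[OF this] show ?thesis using e by simp
qed

lemma rank_mono:
  assumes "rank_ge X le R s d" "(d', d) \<in> R" "trans R" "antisym R"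
  shows "rank_ge X le R s d'"
proof (rule rank_ge.intros)
  fix d'' assume d'': "(d'', d') \<in> R" "d'' \<noteq> d'"
  have 1: "(d'', d) \<in> R" using d''(1) assms(2,3) by (meson transD)
  have 2: "d'' \<noteq> d"
  proof
    assume "d'' = d"
    then have "(d, d') \<in> R" using d'' by simp
    then have "d = d'" using assms(2,4) by (meson antisymD)
    then show False using d'' \<open>d'' = d\<close> by simp
  qed
  show "\<exists>x. antichain_seq X le (s @ [x]) \<and> rank_ge X le R (s @ [x]) d''"
    using rank_geD[OF assms(1) 1 2] .
qed

lemma rank_snoc_prefix:
  assumes "rank_ge X le R (p @ [z]) d" "antichain_seq X le (p @ [z])" "trans R" "antisym R"
  shows "rank_ge X le R p d"
proof (rule rank_ge.intros)
  fix d' assume d': "(d', d) \<in> R" "d' \<noteq> d"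
  have "rank_ge X le R (p @ [z]) d'" using rank_mono[OF assms(1) d'(1) assms(3,4)] .
  then show "\<exists>x. antichain_seq X le (p @ [x]) \<and> rank_ge X le R (p @ [x]) d'"
    using assms(2) by blast
qed

lemma rank_prefix:
  "rank_ge X le R (p @ [z] @ r) d \<Longrightarrow> antichain_seq X le (p @ [z] @ r) \<Longrightarrow> trans R \<Longrightarrow> antisym R
   \<Longrightarrow> rank_ge X le R (p @ [z]) d"
proof (induction r rule: rev_induct)
  case Nil then show ?case by simp
next
  case (snoc y r)
  have a: "antichain_seq X le (p @ [z] @ r)" using snoc.prems(2)
    unfolding antichain_iff using inc_append[of le "p @ [z] @ r" "[y]"] by auto
  have "rank_ge X le R (p @ [z] @ r) d"
    using rank_snoc_prefix[of X le R "p @ [z] @ r" y d] snoc.prems by simp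
  then show ?case using snoc.IH a snoc.prems by blast
qed



definition G :: "('a \<Rightarrow> 'a) \<Rightarrow> nat \<Rightarrow> 'a \<times> 'b \<Rightarrow> 'a \<times> nat \<times> 'b" where
  "G h i p = (h (fst p), (i, snd p))"

lemma antichain_G:
  assumes h: "emb A leA h" and ik: "i < k"
    and s: "s = [] \<or> antichain_seq (A \<times> lexsum_carrier B k) (prod_le leA (lexsum_le leB)) s"
    and sgt: "\<forall>e\<in>set s. i < fst (snd e)"
    and sav: "\<forall>x\<in>A. \<forall>e\<in>set s. \<not> leA (h x) (fst e)"
    and t: "antichain_seq (A \<times> B) (prod_le leA leB) t"
  shows "antichain_seq (A \<times> lexsum_carrier B k) (prod_le leA (lexsum_le leB)) (s @ map (G h i) t)"
proof -
  have t': "t \<noteq> []" "set t \<subseteq> A \<times> B" "inc (prod_le leA leB) t" using t by (auto simp: antichain_iff)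
  have s': "set s \<subseteq> A \<times> lexsum_carrier B k" "inc (prod_le leA (lexsum_le leB)) s"
    using s by (auto simp: antichain_iff inc_Nil)
  have m1: "set (map (G h i) t) \<subseteq> A \<times> lexsum_carrier B k"
    using t'(2) h ik by (auto simp: G_def emb_def lexsum_carrier_def)
  have m2: "inc (prod_le leA (lexsum_le leB)) (map (G h i) t)"
  proof (rule inc_map[OF t'(3)], intro ballI impI)
    fix x y assume xy: "x \<in> set t" "y \<in> set t" "prod_le leA (lexsum_le leB) (G h i x) (G h i y)"
    then have "fst x \<in> A" "fst y \<in> A" using t'(2) by auto
    then show "prod_le leA leB x y" using xy(3) h by (auto simp: G_def prod_le_def lexsum_le_def emb_def)
  qed
  have m3: "\<forall>x\<in>set s. \<forall>y\<in>set (map (G h i) t). \<not> prod_le leA (lexsum_le leB) x y \<and> \<not> prod_le leA (lexsum_le leB) y x"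
  proof (intro ballI)
    fix e y assume e: "e \<in> set s" and y: "y \<in> set (map (G h i) t)"
    then obtain p where p: "p \<in> set t" "y = G h i p" by auto
    have "fst p \<in> A" using p t'(2) by auto
    then have "\<not> leA (h (fst p)) (fst e)" using sav e by auto
    moreover have "i < fst (snd e)" using sgt e by auto
    ultimately show "\<not> prod_le leA (lexsum_le leB) e y \<and> \<not> prod_le leA (lexsum_le leB) y e"
      using p by (auto simp: G_def prod_le_def lexsum_le_def)
  qed
  show ?thesis unfolding antichain_iff inc_append using t'(1) s' m1 m2 m3 by auto
qed

lemma V_trans: "trans W \<Longrightarrow> trans (ord_mult_nat W k)"
  unfolding ord_mult_nat_def trans_def by auto

lemma V_antisym: "antisym W \<Longrightarrow> antisym (ord_mult_nat W k)"
  unfolding ord_mult_nat_def antisym_def by auto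

lemma V_Field: "(i, a) \<in> Field (ord_mult_nat W k) \<Longrightarrow> i < k \<and> a \<in> Field W"
  unfolding Field_def ord_mult_nat_def by auto



lemma main_lemma:
  fixes A :: "'a set" and leA :: "'a \<Rightarrow> 'a \<Rightarrow> bool" and B :: "'b set" and leB :: "'b \<Rightarrow> 'b \<Rightarrow> bool"
    and k :: nat and W :: "'c rel"
  assumes wA: "wqo_on A leA" and sr: "self_residual A leA"
    and Vt: "trans (ord_mult_nat W k)" and Va: "antisym (ord_mult_nat W k)"
    and wid: "width_ge (A \<times> B) (prod_le leA leB) W"
  shows "i < k \<Longrightarrow> \<forall>a t s h. rank_ge (A \<times> B) (prod_le leA leB) W t a \<longrightarrow>
      (t = [] \<or> antichain_seq (A \<times> B) (prod_le leA leB) t) \<longrightarrow> emb A leA h \<longrightarrow>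
      (s = [] \<or> antichain_seq (A \<times> lexsum_carrier B k) (prod_le leA (lexsum_le leB)) s) \<longrightarrow>
      (\<forall>e\<in>set s. i < fst (snd e)) \<longrightarrow> (\<forall>x\<in>A. \<forall>e\<in>set s. \<not> leA (h x) (fst e)) \<longrightarrow>
      rank_ge (A \<times> lexsum_carrier B k) (prod_le leA (lexsum_le leB)) (ord_mult_nat W k)
        (s @ map (G h i) t) (i, a)"
proof (induction i rule: less_induct)
  case (less i)
  show ?case
  proof (intro allI impI)
    fix a t s h
    assume r: "rank_ge (A \<times> B) (prod_le leA leB) W t a"
      and ta: "t = [] \<or> antichain_seq (A \<times> B) (prod_le leA leB) t"
      and h: "emb A leA h"
      and sa: "s = [] \<or> antichain_seq (A \<times> lexsum_carrier B k) (prod_le leA (lexsum_le leB)) s"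
      and sgt: "\<forall>e\<in>set s. i < fst (snd e)"
      and sav: "\<forall>x\<in>A. \<forall>e\<in>set s. \<not> leA (h x) (fst e)"
    from r ta show "rank_ge (A \<times> lexsum_carrier B k) (prod_le leA (lexsum_le leB)) (ord_mult_nat W k)
        (s @ map (G h i) t) (i, a)"
    proof (induction t a rule: rank_ge.induct)
      case (1 a t)
      show ?case
      proof (rule rank_ge.intros)
        fix d' assume d': "(d', (i, a)) \<in> ord_mult_nat W k" "d' \<noteq> (i, a)"
        obtain j b' where jb: "d' = (j, b')" by (cases d')
        have jk: "j < k" and bW: "b' \<in> Field W" and ji: "j < i \<or> (j = i \<and> (b', a) \<in> W)"
          using d'(1) jb unfolding ord_mult_nat_def by auto
        show "\<exists>y. antichain_seq (A \<times> lexsum_carrier B k) (prod_le leA (lexsum_le leB))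
                 ((s @ map (G h i) t) @ [y]) \<and>
               rank_ge (A \<times> lexsum_carrier B k) (prod_le leA (lexsum_le leB)) (ord_mult_nat W k)
                 ((s @ map (G h i) t) @ [y]) d'"
        proof (cases "j < i")
          case False
          then have ji': "j = i" "(b', a) \<in> W" "b' \<noteq> a" using ji d'(2) jb by auto
          obtain x where x1: "antichain_seq (A \<times> B) (prod_le leA leB) (t @ [x])"
            and x3: "(t @ [x] = [] \<or> antichain_seq (A \<times> B) (prod_le leA leB) (t @ [x])) \<longrightarrow>
               rank_ge (A \<times> lexsum_carrier B k) (prod_le leA (lexsum_le leB)) (ord_mult_nat W k)
                 (s @ map (G h i) (t @ [x])) (i, b')"
            using "1.IH"[OF ji'(2) ji'(3)] by blast
          have ac: "antichain_seq (A \<times> lexsum_carrier B k) (prod_le leA (lexsum_le leB))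
               (s @ map (G h i) (t @ [x]))"
            using antichain_G[OF h less.prems sa sgt sav x1] .
          have rk: "rank_ge (A \<times> lexsum_carrier B k) (prod_le leA (lexsum_le leB)) (ord_mult_nat W k)
                 (s @ map (G h i) (t @ [x])) (i, b')" using x3 x1 by simp
          show ?thesis using ac rk jb ji'(1) by (intro exI[of _ "G h i x"]) simp
        next
          case True
          obtain t0 where t0: "antichain_seq (A \<times> B) (prod_le leA leB) t0"
            "rank_ge (A \<times> B) (prod_le leA leB) W t0 b'"
            using wid bW unfolding width_ge_def by blast
          define s' where "s' = s @ map (G h i) t"
          have s'a: "s' = [] \<or> antichain_seq (A \<times> lexsum_carrier B k) (prod_le leA (lexsum_le leB)) s'"
          proof (cases "t = []")
            case True then show ?thesis using sa by (simp add: s'_def)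
          next
            case False
            then have "antichain_seq (A \<times> B) (prod_le leA leB) t" using "1.prems" by simp
            then show ?thesis using antichain_G[OF h less.prems sa sgt sav] by (simp add: s'_def)
          qed
          have s'D: "set s' \<subseteq> A \<times> lexsum_carrier B k" using s'a by (auto simp: antichain_iff)
          have s'gt: "\<forall>e\<in>set s'. j < fst (snd e)" using sgt True by (auto simp: s'_def G_def)
          have LA: "set (map fst s') \<subseteq> A" using s'D by auto
          obtain h' where h': "emb A leA h'" "\<forall>x\<in>A. \<forall>a\<in>set (map fst s'). \<not> leA (h' x) a"
            using avoid_list[OF wA sr LA] by blast
          have sav': "\<forall>x\<in>A. \<forall>e\<in>set s'. \<not> leA (h' x) (fst e)" using h'(2) by auto
          have R: "rank_ge (A \<times> lexsum_carrier B k) (prod_le leA (lexsum_le leB)) (ord_mult_nat W k)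
                 (s' @ map (G h' j) t0) (j, b')"
            using less.IH[OF True jk, rule_format, OF t0(2) disjI2[OF t0(1)] h'(1) s'a s'gt[rule_format] sav'[rule_format]] .
          obtain x0 r0 where t0e: "t0 = x0 # r0" using t0(1) by (cases t0) (auto simp: antichain_iff)
          have AC: "antichain_seq (A \<times> lexsum_carrier B k) (prod_le leA (lexsum_le leB))
                 (s' @ map (G h' j) t0)"
            using antichain_G[OF h'(1) jk s'a s'gt sav' t0(1)] .
          then have AC': "antichain_seq (A \<times> lexsum_carrier B k) (prod_le leA (lexsum_le leB))
                 (s' @ [G h' j x0] @ map (G h' j) r0)" by (simp add: t0e)
          have R': "rank_ge (A \<times> lexsum_carrier B k) (prod_le leA (lexsum_le leB)) (ord_mult_nat W k)
                 (s' @ [G h' j x0] @ map (G h' j) r0) (j, b')" using R by (simp add: t0e)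
          have R2: "rank_ge (A \<times> lexsum_carrier B k) (prod_le leA (lexsum_le leB)) (ord_mult_nat W k)
                 (s' @ [G h' j x0]) (j, b')" using rank_prefix[OF R' AC' Vt Va] .
          have AC2: "antichain_seq (A \<times> lexsum_carrier B k) (prod_le leA (lexsum_le leB))
                 (s' @ [G h' j x0])"
            using AC' unfolding antichain_iff using inc_append[of _ "s' @ [G h' j x0]" "map (G h' j) r0"]
            by auto
          show ?thesis using AC2 R2 jb unfolding s'_def by (intro exI[of _ "G h' j x0"]) simp
        qed
      qed
    qed
  qed
qed

theorem mainTheorem3:
  fixes A :: "'a set" and leA :: "'a \<Rightarrow> 'a \<Rightarrow> bool"
    and B :: "'b set" and leB :: "'b \<Rightarrow> 'b \<Rightarrow> bool"
    and k :: nat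
  assumes "wqo_on A leA" and "wqo_on B leB" and "self_residual A leA"
  shows "\<forall>W :: 'c rel. Well_order W \<and> width_ge (A \<times> B) (prod_le leA leB) W \<longrightarrow>
           width_ge (A \<times> lexsum_carrier B k) (prod_le leA (lexsum_le leB)) (ord_mult_nat W k)"
proof (intro allI impI)
  fix W :: "'c rel" assume H: "Well_order W \<and> width_ge (A \<times> B) (prod_le leA leB) W"
  have tW: "trans W" "antisym W" using H
    unfolding well_order_on_def linear_order_on_def partial_order_on_def preorder_on_def by auto
  have Vt: "trans (ord_mult_nat W k)" using V_trans[OF tW(1)] .
  have Va: "antisym (ord_mult_nat W k)" using V_antisym[OF tW(2)] .
  have wid: "width_ge (A \<times> B) (prod_le leA leB) W" using H by simp
  have idemb: "emb A leA id" by (simp add: emb_def)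
  show "width_ge (A \<times> lexsum_carrier B k) (prod_le leA (lexsum_le leB)) (ord_mult_nat W k)"
    unfolding width_ge_def
  proof
    fix d assume d: "d \<in> Field (ord_mult_nat W k)"
    obtain i a where ia: "d = (i, a)" by (cases d)
    have ik: "i < k" "a \<in> Field W" using V_Field[of i a W k] d ia by auto
    obtain t0 where t0: "antichain_seq (A \<times> B) (prod_le leA leB) t0"
      "rank_ge (A \<times> B) (prod_le leA leB) W t0 a"
      using wid ik(2) unfolding width_ge_def by blast
    have R: "rank_ge (A \<times> lexsum_carrier B k) (prod_le leA (lexsum_le leB)) (ord_mult_nat W k)
        ([] @ map (G id i) t0) (i, a)"
      using main_lemma[OF assms(1,3) Vt Va wid ik(1), rule_format, OF t0(2) disjI2[OF t0(1)] idemb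
          disjI1[OF refl]] by simp
    have AC: "antichain_seq (A \<times> lexsum_carrier B k) (prod_le leA (lexsum_le leB)) ([] @ map (G id i) t0)"
      using antichain_G[where s="[]", OF idemb ik(1)] t0(1) by simp
    show "\<exists>s. antichain_seq (A \<times> lexsum_carrier B k) (prod_le leA (lexsum_le leB)) s \<and>
        rank_ge (A \<times> lexsum_carrier B k) (prod_le leA (lexsum_le leB)) (ord_mult_nat W k) s d"
      using R AC ia by (intro exI[of _ "map (G id i) t0"]) simp
  qed
qed

end
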